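(* Let $\Gamma$ be a telescopic numerical semigroup minimally generated by $r_0<\cdots<r_h$ with $h\ge 2$, let $c=\mathrm c(\Gamma)$ and $d_h=\gcd(r_0,\ldots,r_{h-1})$. Then $$2^{h+1}-1\le r_h\le \frac{c}{d_h-1}-\big((h-2)2^h+2\big)\frac{d_h}{d_h-1}+1\le c-(h-2)2^h-1.$$
   Context: A numerical semigroup is a submonoid of $(\mathbb N,+)$ with finite complement in $\mathbb N$; it has a unique minimal generating system. $\mathrm F(\Gamma)$ is the largest integer not in $\Gamma$, and $\mathrm c(\Gamma)=\mathrm F(\Gamma)+1$. $\langle X\rangle$ is the submonoid generated by $X$. For an arrangement $(r_0,\ldots,r_h)$ of the minimal generators, set $d_k=\gcd(r_0,\ldots,r_{k-1})$. A set $A$ of positive integers with nontrivial partition $A=A_1\cup A_2$ is the gluing of $A_1$ and $A_2$ if $\mathrm{lcm}(\gcd A_1,\gcd A_2)\in\langle A_1\rangle\cap\langle A_2\rangle$. $\Gamma$ is free for $(r_0,\ldots,r_h)$ if $h=0$, or $h\ge1$, $\{r_0,\ldots,r_h\}$ is the gluing of $\{r_0,\ldots,r_{h-1}\}$ and $\{r_h\}$, and $\langle r_0/d_h,\ldots,r_{h-1}/d_h\rangle$ is free for $(r_0/d_h,\ldots,r_{h-1}/d_h)$. $\Gamma$ is telescopic if it is free for the arrangement of its minimal generators in increasing order. *)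

theory Defs
  imports Complex_Main
begin

inductive_set gen :: "nat set \<Rightarrow> nat set" for X :: "nat set" where
  gen_zero: "0 \<in> gen X"
| gen_add: "x \<in> X \<Longrightarrow> y \<in> gen X \<Longrightarrow> x + y \<in> gen X"

definition numerical_semigroup :: "nat set \<Rightarrow> bool" where
  "numerical_semigroup S \<longleftrightarrow> 0 \<in> S \<and> (\<forall>x\<in>S. \<forall>y\<in>S. x + y \<in> S) \<and> finite (UNIV - S)"

definition min_gens :: "nat set \<Rightarrow> nat set" where
  "min_gens S = {x \<in> S. x \<noteq> 0 \<and> \<not> (\<exists>a\<in>S. \<exists>b\<in>S. a \<noteq> 0 \<and> b \<noteq> 0 \<and> x = a + b)}"

definition frobenius :: "nat set \<Rightarrow> int" where
  "frobenius S = (if UNIV - S = {} then -1 else int (Max (UNIV - S)))"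

definition conductor :: "nat set \<Rightarrow> int" where
  "conductor S = frobenius S + 1"

definition is_gluing :: "nat set \<Rightarrow> nat set \<Rightarrow> nat set \<Rightarrow> bool" where
  "is_gluing A A1 A2 \<longleftrightarrow> A = A1 \<union> A2 \<and> A1 \<inter> A2 = {} \<and> A1 \<noteq> {} \<and> A2 \<noteq> {} \<and>
     lcm (Gcd A1) (Gcd A2) \<in> gen A1 \<inter> gen A2"

function free_arr :: "nat list \<Rightarrow> bool" where
  "free_arr rs = (if length rs \<le> 1 then length rs = 1 else
     (let A = butlast rs; r = last rs; d = Gcd (set A) in
        is_gluing (set rs) (set A) {r} \<and> free_arr (map (\<lambda>x. x div d) A)))"
  by pat_completeness auto
termination by (relation "measure length") auto

definition telescopic :: "nat set \<Rightarrow> bool" where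
  "telescopic S \<longleftrightarrow> numerical_semigroup S \<and> free_arr (sorted_list_of_set (min_gens S))"

end

theory Submission imports Defs begin


lemma gen_base: "x \<in> X \<Longrightarrow> x \<in> gen X"
  using gen_add[of x X 0] gen_zero by simp

lemma gen_add_closed: "x \<in> gen X \<Longrightarrow> y \<in> gen X \<Longrightarrow> x + y \<in> gen X"
  by (induction x rule: gen.induct) (auto simp: add.assoc intro: gen_add)

lemma gen_mult: "r \<in> gen X \<Longrightarrow> t * r \<in> gen X"
  by (induction t) (auto intro: gen_add_closed gen_zero)

lemma gen_insert_decomp: "z \<in> gen (insert r X) \<Longrightarrow> \<exists>a\<in>gen X. \<exists>t. z = a + t * r"
proof (induction z rule: gen.induct)
  case gen_zero then show ?case using gen.gen_zero by (metis add_0 mult_0)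
next
  case (gen_add x y)
  then obtain a t where a: "a \<in> gen X" "y = a + t * r" by blast
  show ?case
  proof (cases "x = r")
    case True then show ?thesis using a by (intro bexI[of _ a] exI[of _ "Suc t"]) auto
  next
    case False then have "x \<in> X" using gen_add by auto
    then show ?thesis using a by (intro bexI[of _ "x + a"] exI[of _ t]) (auto intro: gen.gen_add)
  qed
qed

lemma gen_scale_down: "z \<in> gen ((*) d ` X) \<Longrightarrow> \<exists>x\<in>gen X. z = d * x"
proof (induction z rule: gen.induct)
  case gen_zero then show ?case using gen.gen_zero by force
next
  case (gen_add x y)
  then obtain a where a: "a \<in> gen X" "y = d * a" by blast
  from gen_add obtain u where "u \<in> X" "x = d * u" by blast
  moreover have "u + a \<in> gen X" using a(1) \<open>u \<in> X\<close> by (simp add: gen.gen_add)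
  ultimately show ?case using a by (intro bexI[of _ "u + a"]) (auto simp: algebra_simps)
qed

lemma gen_scale_up: "x \<in> gen X \<Longrightarrow> d * x \<in> gen ((*) d ` X)"
  by (induction x rule: gen.induct) (auto simp: algebra_simps intro: gen.intros)

lemma gen_subset: "X \<subseteq> S \<Longrightarrow> 0 \<in> S \<Longrightarrow> (\<forall>x\<in>S. \<forall>y\<in>S. x + y \<in> S) \<Longrightarrow> gen X \<subseteq> S"
proof
  fix z assume "z \<in> gen X" "X \<subseteq> S" "0 \<in> S" "\<forall>x\<in>S. \<forall>y\<in>S. x + y \<in> S"
  then show "z \<in> S" by (induction z rule: gen.induct) auto
qed

lemma gen_dvd: "z \<in> gen X \<Longrightarrow> \<forall>x\<in>X. g dvd x \<Longrightarrow> g dvd (z::nat)"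
  by (induction z rule: gen.induct) auto

function Nf :: "nat list \<Rightarrow> int" where
  "Nf rs = (if length rs \<le> 1 then -1 else
     (let A = butlast rs; r = last rs; d = Gcd (set A) in
        int d * Nf (map (\<lambda>x. x div d) A) + (int d - 1) * int r))"
  by pat_completeness auto
termination by (relation "measure length") auto

declare Nf.simps[simp del] free_arr.simps[simp del]

definition good :: "nat list \<Rightarrow> bool" where
  "good rs \<longleftrightarrow> rs \<noteq> [] \<and> free_arr rs \<and> sorted_wrt (<) rs \<and> (\<forall>x\<in>set rs. 0 < x) \<and> Gcd (set rs) = 1
     \<and> (\<forall>k<length rs. rs ! k \<notin> gen (set (take k rs)))"

lemma good_step:
  assumes g: "good rs" and len: "2 \<le> length rs"
  defines "A \<equiv> butlast rs" and "r \<equiv> last rs"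
  defines "d \<equiv> Gcd (set A)"
  defines "A' \<equiv> map (\<lambda>x. x div d) A"
  shows "good A'" "2 \<le> d" "coprime d r" "A = map ((*) d) A'" "r \<in> gen (set A')"
    "\<forall>x\<in>set A. x < r" "length A' = length rs - 1"
    "Nf rs = int d * Nf A' + (int d - 1) * int r"
proof -
  have rs: "rs = A @ [r]" using len unfolding A_def r_def by (cases rs rule: rev_cases) auto
  have An: "A \<noteq> []" using len rs by auto
  have fa: "free_arr rs" using g by (simp add: good_def)
  hence glue: "is_gluing (set rs) (set A) {r}" and faA': "free_arr A'"
    using len unfolding A'_def d_def A_def r_def by (subst (asm) free_arr.simps; simp add: Let_def)+
  show "Nf rs = int d * Nf A' + (int d - 1) * int r"
    using len unfolding A'_def d_def A_def r_def by (subst Nf.simps) (simp add: Let_def)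
  show "length A' = length rs - 1" unfolding A'_def A_def by simp
  have pos: "\<forall>x\<in>set rs. 0 < x" using g by (simp add: good_def)
  have dvdA: "\<forall>x\<in>set A. d dvd x" unfolding d_def by simp
  have dpos: "d > 0"
  proof -
    obtain a where "a \<in> set A" using An by (cases A) auto
    then have "d dvd a" "a > 0" using dvdA pos rs by auto
    then show ?thesis by (cases "d = 0") auto
  qed
  show Aeq: "A = map ((*) d) A'" unfolding A'_def
    by (simp add: map_idI dvdA)
  have setA: "set A = (*) d ` set A'" using Aeq by simp
  have "Gcd (set rs) = 1" using g by (simp add: good_def)
  hence "gcd r d = 1" using rs d_def by simp
  thus cop: "coprime d r" by (simp add: coprime_iff_gcd_eq_1 gcd.commute)
  have "lcm d r \<in> gen (set A)" using glue unfolding is_gluing_def d_def by simp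
  moreover have "lcm d r = d * r" using prod_gcd_lcm_nat[of d r] cop by (simp add: coprime_iff_gcd_eq_1 lcm_coprime)
  ultimately have "d * r \<in> gen ((*) d ` set A')" using setA by simp
  then obtain x where "x \<in> gen (set A')" "d * r = d * x" using gen_scale_down by blast
  thus rA': "r \<in> gen (set A')" using dpos by simp
  have minv: "\<forall>k<length rs. rs ! k \<notin> gen (set (take k rs))" using g by (simp add: good_def)
  show "2 \<le> d"
  proof (rule ccontr)
    assume "\<not> 2 \<le> d"
    hence "d = 1" using dpos by simp
    hence "r \<in> gen (set A)" using \<open>lcm d r \<in> gen (set A)\<close> by simp
    moreover have "rs ! length A = r" "take (length A) rs = A" using rs by auto
    ultimately show False using minv rs by (metis length_append_singleton lessI)
  qed
  have sor: "sorted_wrt (<) rs" using g by (simp add: good_def)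
  show lt: "\<forall>x\<in>set A. x < r" using sor rs by (simp add: sorted_wrt_append)
  have sA: "sorted_wrt (<) A" using sor rs by (simp add: sorted_wrt_append)
  have "sorted_wrt (<) A'" unfolding A'_def sorted_wrt_map
  proof (rule sorted_wrt_mono_rel[OF _ sA])
    fix x y assume "x \<in> set A" "y \<in> set A" "x < y"
    then show "x div d < y div d" using dvdA dpos
      by (metis dvd_div_mult_self mult_less_cancel2)
  qed
  moreover have "\<forall>x\<in>set A'. 0 < x" unfolding A'_def
  proof
    fix y assume "y \<in> set (map (\<lambda>x. x div d) A)"
    then obtain x where x: "x \<in> set A" "y = x div d" by auto
    then have "d dvd x" "0 < x" using dvdA pos rs by auto
    then have "d \<le> x" by (simp add: dvd_imp_le)
    then show "0 < y" using x dpos by (simp add: div_greater_zero_iff)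
  qed
  moreover have "Gcd (set A') = 1"
  proof -
    have "d = Gcd ((*) d ` set A')" using setA d_def by simp
    also have "\<dots> = d * Gcd (set A')" by (simp add: Gcd_mult)
    finally show ?thesis using dpos by simp
  qed
  moreover have "\<forall>k<length A'. A' ! k \<notin> gen (set (take k A'))"
  proof (intro allI impI notI)
    fix k assume k: "k < length A'" and inn: "A' ! k \<in> gen (set (take k A'))"
    have "d * A' ! k \<in> gen ((*) d ` set (take k A'))" using gen_scale_up[OF inn] .
    moreover have "(*) d ` set (take k A') = set (take k rs)" using Aeq rs k
      by (metis length_map set_map take_append take_map diff_is_0_eq' less_or_eq_imp_le append_Nil2 take_0 zero_le)
    moreover have "d * A' ! k = rs ! k" using Aeq rs k by (metis length_map nth_append nth_map)
    moreover have "k < length rs" using k rs Aeq by simp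
    ultimately show False using minv by auto
  qed
  ultimately show "good A'" unfolding good_def using faA' An A'_def by auto
qed




lemma good_gap: "good rs \<Longrightarrow> Nf rs = int m \<Longrightarrow> m \<notin> gen (set rs)"
proof (induction "length rs" arbitrary: rs m rule: less_induct)
  case less
  show ?case
  proof (cases "length rs \<le> 1")
    case True then show ?thesis using less.prems by (subst (asm) Nf.simps) simp
  next
    case False
    hence len: "2 \<le> length rs" by simp
    define A where "A = butlast rs"
    define r where "r = last rs"
    define d where "d = Gcd (set A)"
    define A' where "A' = map (\<lambda>x. x div d) A"
    note st = good_step[OF less.prems(1) len, folded A_def r_def, folded d_def, folded A'_def]
    have rs: "rs = A @ [r]" using len unfolding A_def r_def by (cases rs rule: rev_cases) auto
    show ?thesis
    proof
      assume "m \<in> gen (set rs)"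
      hence "m \<in> gen (insert r (set A))" using rs by simp
      then obtain a t where a: "a \<in> gen (set A)" "m = a + t * r" using gen_insert_decomp by blast
      have "a \<in> gen ((*) d ` set A')" using a st(4) by (metis list.set_map)
      then obtain a' where a': "a' \<in> gen (set A')" "a = d * a'" using gen_scale_down by blast
      have eq: "int d * Nf A' + (int d - 1) * int r = int d * int a' + int t * int r"
        using st(8) less.prems(2) a a' by simp
      hence eq2: "int d * (Nf A' + int r - int a') = (int t + 1) * int r" by (simp add: algebra_simps)
      hence "int d dvd (int t + 1) * int r" by (metis dvd_triv_left)
      moreover have "coprime (int d) (int r)" using st(3) by simp
      ultimately have "int d dvd int t + 1" using coprime_dvd_mult_left_iff by blast
      then obtain q where q: "int t + 1 = int d * q" by blast
      have dpos: "int d > 0" using st(2) by simp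
      have "int d * q > 0" using q by linarith
      hence "q > 0" using dpos by (simp add: zero_less_mult_iff)
      have "(int t + 1) * int r = int d * (q * int r)" using q by (simp add: mult.assoc)
      hence "int d * (Nf A' + int r - int a') = int d * (q * int r)" using eq2 by simp
      hence "Nf A' + int r - int a' = q * int r" using dpos by simp
      hence "Nf A' = int a' + (q - 1) * int r" by (simp add: algebra_simps)
      moreover have "int (nat (q - 1)) = q - 1" using \<open>q > 0\<close> by simp
      ultimately have N: "Nf A' = int (a' + nat (q - 1) * r)" by simp
      have "a' + nat (q - 1) * r \<in> gen (set A')" using a' st(5) by (simp add: gen_add_closed gen_mult)
      moreover have "length A' < length rs" using st(7) len by simp
      ultimately show False using less.hyps[OF _ st(1) N] by blast
    qed
  qed
qed

lemma good_last: "good rs \<Longrightarrow> 2 ^ length rs \<le> last rs + 1"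
proof (induction "length rs" arbitrary: rs rule: less_induct)
  case less
  show ?case
  proof (cases "length rs \<le> 1")
    case True
    then obtain x where "rs = [x]" using less.prems unfolding good_def
      by (cases rs) auto
    then show ?thesis using less.prems unfolding good_def by auto
  next
    case False
    hence len: "2 \<le> length rs" by simp
    define A where "A = butlast rs"
    define r where "r = last rs"
    define d where "d = Gcd (set A)"
    define A' where "A' = map (\<lambda>x. x div d) A"
    note st = good_step[OF less.prems(1) len, folded A_def r_def, folded d_def, folded A'_def]
    have IH: "2 ^ length A' \<le> last A' + 1" using less.hyps[OF _ st(1)] st(7) len by simp
    have An: "A' \<noteq> []" using st(7) len by auto
    have "last A = d * last A'" using st(4) An by (simp add: last_map)
    moreover have "last A \<in> set A" using An st(4) by (metis last_in_set list.map_disc_iff)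
    ultimately have "d * last A' < r" using st(6) by auto
    moreover have "2 * last A' \<le> d * last A'" using st(2) by simp
    ultimately have "2 * last A' + 1 \<le> r" by linarith
    moreover have "length rs = Suc (length A')" using st(7) len by simp
    ultimately show ?thesis using IH unfolding r_def by simp
  qed
qed

lemma good_Nf: "good rs \<Longrightarrow> length rs = n + 1 \<Longrightarrow> 1 \<le> n \<Longrightarrow> Nf rs \<ge> (int n - 1) * 2 ^ (n + 1) + 1"
proof (induction n arbitrary: rs)
  case 0 then show ?case by simp
next
  case (Suc n)
  hence len: "2 \<le> length rs" by simp
  define A where "A = butlast rs"
  define r where "r = last rs"
  define d where "d = Gcd (set A)"
  define A' where "A' = map (\<lambda>x. x div d) A"
  note st = good_step[OF Suc.prems(1) len, folded A_def r_def, folded d_def, folded A'_def]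
  have rb: "2 ^ (n + 2) \<le> r + 1" using good_last[OF Suc.prems(1)] Suc.prems(2) unfolding r_def by simp
  hence rb': "2 ^ (n + 2) \<le> int r + 1" using of_nat_le_iff[of "2^(n+2)" "r+1", where 'a=int] by simp
  have d2: "2 \<le> int d" using st(2) by simp
  have "(int d - 1) * int r \<ge> 1 * int r" using d2 by (intro mult_right_mono) auto
  show ?case
  proof (cases "n = 0")
    case True
    then have "length A' = 1" using st(7) Suc.prems by simp
    then have "Nf A' = -1" by (subst Nf.simps) simp
    moreover have "int r \<ge> 3" using rb' True by simp
    moreover have "(int d - 1) * int r \<ge> (int d - 1) * 3" using \<open>int r \<ge> 3\<close> d2 by (intro mult_left_mono) auto
    ultimately show ?thesis using st(8) True d2 by simp
  next
    case False
    have IH: "Nf A' \<ge> (int n - 1) * 2 ^ (n + 1) + 1" using Suc.IH[OF st(1)] st(7) Suc.prems False by simp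
    have "(int n - 1) * 2 ^ (n + 1) \<ge> 0" using False by simp
    hence "Nf A' \<ge> 1" using IH by simp
    have "int d * Nf A' \<ge> 2 * Nf A'" using d2 \<open>Nf A' \<ge> 1\<close> by (intro mult_right_mono) auto
    have "2 * ((int n - 1) * 2 ^ (n + 1) + 1) \<le> 2 * Nf A'" using IH by simp
    hence "Nf rs \<ge> 2 * ((int n - 1) * 2 ^ (n + 1) + 1) + int r"
      using st(8) \<open>int d * Nf A' \<ge> 2 * Nf A'\<close> \<open>(int d - 1) * int r \<ge> 1 * int r\<close> by linarith
    moreover have "(2::int) * ((int n - 1) * 2 ^ (n + 1) + 1) + (2 ^ (n + 2) - 1) = (int (Suc n) - 1) * 2 ^ (Suc n + 1) + 1"
      by (simp add: algebra_simps)
    ultimately show ?thesis using rb' by linarith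
  qed
qed



lemma ns_gen_min: assumes ns: "numerical_semigroup S" shows "S \<subseteq> gen (min_gens S)"
proof
  fix x assume "x \<in> S"
  then show "x \<in> gen (min_gens S)"
  proof (induction x rule: less_induct)
    case (less x)
    show ?case
    proof (cases "x = 0")
      case True then show ?thesis by (simp add: gen_zero)
    next
      case False
      show ?thesis
      proof (cases "x \<in> min_gens S")
        case True then show ?thesis by (rule gen_base)
      next
        case nm: False
        then obtain a b where ab: "a \<in> S" "b \<in> S" "a \<noteq> 0" "b \<noteq> 0" "x = a + b"
          using less.prems False unfolding min_gens_def by blast
        then have "a \<in> gen (min_gens S)" "b \<in> gen (min_gens S)" using less.IH by auto
        then show ?thesis using ab gen_add_closed by blast
      qed
    qed
  qed
qed

lemma ns_gen_sub: assumes ns: "numerical_semigroup S" shows "gen (min_gens S) \<subseteq> S"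
  using ns by (intro gen_subset) (auto simp: numerical_semigroup_def min_gens_def)

lemma ns_Gcd: assumes ns: "numerical_semigroup S" shows "Gcd (min_gens S) = 1"
proof -
  have fin: "finite (UNIV - S)" using ns by (simp add: numerical_semigroup_def)
  obtain n where n: "\<forall>m\<ge>n. m \<in> S"
  proof -
    obtain M where "\<forall>m\<in>UNIV - S. m \<le> M" using fin finite_nat_set_iff_bounded_le by blast
    then show ?thesis using that[of "Suc M"] by (metis Diff_iff UNIV_I not_less_eq_eq)
  qed
  have "\<forall>x\<in>S. Gcd (min_gens S) dvd x"
    using ns_gen_min[OF ns] gen_dvd[of _ "min_gens S" "Gcd (min_gens S)"] by auto
  then have "Gcd (min_gens S) dvd n" "Gcd (min_gens S) dvd Suc n" using n by auto
  then show ?thesis by (metis Suc_eq_plus1 dvd_add_right_iff nat_dvd_1_iff_1)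
qed

lemma telescopic_good:
  assumes "telescopic S" "length (sorted_list_of_set (min_gens S)) = h + 1"
  shows "good (sorted_list_of_set (min_gens S))"
proof -
  let ?M = "min_gens S"
  let ?rs = "sorted_list_of_set ?M"
  have ns: "numerical_semigroup S" and fa: "free_arr ?rs" using assms by (auto simp: telescopic_def)
  have fin: "finite ?M" using assms(2) by (cases "finite ?M") auto
  have set: "set ?rs = ?M" using fin by simp
  have srt: "sorted_wrt (<) ?rs" by (simp add: strict_sorted_iff)
  have minv: "\<forall>k<length ?rs. ?rs ! k \<notin> gen (set (take k ?rs))"
  proof (intro allI impI notI)
    fix k assume k: "k < length ?rs" and inn: "?rs ! k \<in> gen (set (take k ?rs))"
    let ?x = "?rs ! k" and ?Y = "set (take k ?rs)"
    have xM: "?x \<in> ?M" using k set nth_mem by blast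
    have YM: "?Y \<subseteq> ?M" using set set_take_subset by metis
    have Ylt: "\<forall>y\<in>?Y. y < ?x" using srt k
      by (auto simp: in_set_conv_nth sorted_wrt_iff_nth_less)
    have "?x \<notin> ?Y" using Ylt by blast
    have "?x = 0 \<or> (\<exists>y z. y \<in> ?Y \<and> z \<in> gen ?Y \<and> ?x = y + z)"
      using inn by (cases rule: gen.cases) auto
    moreover have "?x \<noteq> 0" using xM by (simp add: min_gens_def)
    ultimately obtain y z where yz: "y \<in> ?Y" "z \<in> gen ?Y" "?x = y + z" by blast
    have "z \<noteq> 0" using yz \<open>?x \<notin> ?Y\<close> by (metis add.right_neutral)
    have "gen ?Y \<subseteq> S" 
    proof (rule gen_subset)
      show "?Y \<subseteq> S" using YM by (auto simp: min_gens_def)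
    qed (use ns in \<open>auto simp: numerical_semigroup_def\<close>)
    hence "z \<in> S" using yz by auto
    moreover have "y \<in> S" "y \<noteq> 0" using yz YM by (auto simp: min_gens_def)
    ultimately show False using xM yz \<open>z \<noteq> 0\<close> unfolding min_gens_def by blast
  qed
  have "?rs \<noteq> []" using assms(2) by (metis list.size(3) nat.distinct(1) Suc_eq_plus1)
  moreover have "\<forall>x\<in>set ?rs. 0 < x" using set by (auto simp: min_gens_def)
  moreover have "Gcd (set ?rs) = 1" using set ns_Gcd[OF ns] by simp
  ultimately show ?thesis unfolding good_def using fa srt minv by blast
qed




theorem corollary4p3:
  fixes S :: "nat set" and h :: nat
  assumes "telescopic S"
    and "length (sorted_list_of_set (min_gens S)) = h + 1"
    and "h \<ge> 2"
  shows "let rs = sorted_list_of_set (min_gens S);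
             rh = real (rs ! h);
             d = real (Gcd (set (take h rs)));
             c = real_of_int (conductor S)
         in 2 ^ (h + 1) - 1 \<le> rh
          \<and> rh \<le> c / (d - 1) - ((real h - 2) * 2 ^ h + 2) * d / (d - 1) + 1
          \<and> c / (d - 1) - ((real h - 2) * 2 ^ h + 2) * d / (d - 1) + 1 \<le> c - (real h - 2) * 2 ^ h - 1"
proof -
  define rs where "rs = sorted_list_of_set (min_gens S)"
  have g: "good rs" using telescopic_good[OF assms(1,2)] rs_def by simp
  have ns: "numerical_semigroup S" using assms(1) by (simp add: telescopic_def)
  have len: "length rs = h + 1" using assms(2) rs_def by simp
  hence len2: "2 \<le> length rs" using assms(3) by simp
  define A where "A = butlast rs"
  define r where "r = last rs"
  define d where "d = Gcd (set A)"
  define A' where "A' = map (\<lambda>x. x div d) A"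
  note st = good_step[OF g len2, folded A_def r_def, folded d_def, folded A'_def]
  have rh: "rs ! h = r" unfolding r_def using len by (metis last_conv_nth diff_add_inverse2 list.size(3) nat.distinct(1) Suc_eq_plus1)
  have dd: "Gcd (set (take h rs)) = d" unfolding d_def A_def using len by (simp add: butlast_conv_take)
  have rb: "2 ^ (h + 1) \<le> r + 1" using good_last[OF g] len unfolding r_def by simp
  have NA': "Nf A' \<ge> (int (h - 1) - 1) * 2 ^ (h - 1 + 1) + 1"
    using good_Nf[OF st(1), of "h - 1"] st(7) len assms(3) by simp
  have NA'': "Nf A' \<ge> (int h - 2) * 2 ^ h + 1"
  proof -
    have "int (h - 1) - 1 = int h - 2" "h - 1 + 1 = h" using assms(3) by auto
    then show ?thesis using NA' by simp
  qed
  have d2: "2 \<le> int d" using st(2) by simp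
  have "(int h - 2) * 2 ^ h \<ge> 0" using assms(3) by simp
  hence "Nf A' \<ge> 1" using NA'' by linarith
  have "int d * Nf A' \<ge> 0" using \<open>Nf A' \<ge> 1\<close> by simp
  moreover have "(int d - 1) * int r \<ge> 0" using d2 by simp
  ultimately have "Nf rs \<ge> 0" using st(8) by linarith
  then obtain m where m: "Nf rs = int m" by (metis nonneg_int_cases)
  have "m \<notin> gen (set rs)" using good_gap[OF g m] .
  moreover have "set rs = min_gens S" unfolding rs_def
    using assms(2) by (cases "finite (min_gens S)") auto
  ultimately have "m \<notin> S" using ns_gen_min[OF ns] by auto
  moreover have "finite (UNIV - S)" using ns by (simp add: numerical_semigroup_def)
  ultimately have "frobenius S \<ge> int m" unfolding frobenius_def by auto
  hence cge: "conductor S \<ge> int d * Nf A' + (int d - 1) * int r + 1" using m st(8) by (simp add: conductor_def)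
  define C where "C = real_of_int (conductor S)"
  define D where "D = real d"
  define R where "R = real r"
  define N where "N = real_of_int (Nf A')"
  define P where "P = (2::real) ^ h"
  have P0: "P \<ge> 0" unfolding P_def by simp
  have D2: "D \<ge> 2" using st(2) unfolding D_def by simp
  have h2: "real h \<ge> 2" using assms(3) by simp
  have "real_of_int ((int h - 2) * 2 ^ h + 1) \<le> real_of_int (Nf A')" using NA'' by (simp only: of_int_le_iff)
  hence N1: "N \<ge> (real h - 2) * P + 1" unfolding N_def P_def by simp
  have "real_of_int (int d * Nf A' + (int d - 1) * int r + 1) \<le> real_of_int (conductor S)" using cge by (simp only: of_int_le_iff)
  hence C1: "C \<ge> D * N + (D - 1) * R + 1" unfolding C_def D_def N_def R_def by simp
  have "real (2 ^ (h + 1)) \<le> real (r + 1)" using rb by (simp only: of_nat_le_iff)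
  hence R1: "2 ^ (h + 1) - 1 \<le> R" unfolding R_def by simp
  have "(2::real) ^ (h + 1) \<ge> 2" by (metis le_add2 one_le_numeral power_increasing power_one_right)
  hence R1': "R \<ge> 1" using R1 by linarith
  define X where "X = (real h - 2) * P + 2"
  have X2: "X \<ge> 2" unfolding X_def using h2 P0 by simp
  have DN: "D * N \<ge> D * (X - 1)" using N1 D2 unfolding X_def by (intro mult_left_mono) auto
  have C2: "C \<ge> (R - 1) * (D - 1) + X * D" using C1 DN by (simp add: algebra_simps)
  have C0: "C \<ge> 0" 
  proof -
    have "(R - 1) * (D - 1) \<ge> 0" using R1' D2 by simp
    moreover have "X * D \<ge> 0" using X2 D2 by simp
    ultimately show ?thesis using C2 by linarith
  qed
  have g2: "R \<le> C / (D - 1) - X * D / (D - 1) + 1"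
  proof -
    have "(R - 1) * (D - 1) \<le> C - X * D" using C2 by simp
    hence "R - 1 \<le> (C - X * D) / (D - 1)" using D2 by (simp add: pos_le_divide_eq)
    thus ?thesis by (simp add: diff_divide_distrib)
  qed
  have g3: "C / (D - 1) - X * D / (D - 1) + 1 \<le> C - X + 1"
  proof -
    have "C * D \<ge> C * 2" using C0 D2 by (intro mult_left_mono) auto
    hence "C - X * D \<le> (C - X) * (D - 1)" using X2 by (simp add: algebra_simps)
    hence "(C - X * D) / (D - 1) \<le> C - X" using D2 by (simp add: pos_divide_le_eq)
    thus ?thesis by (simp add: diff_divide_distrib)
  qed
  have g3': "C / (D - 1) - X * D / (D - 1) + 1 \<le> C - (real h - 2) * P - 1" using g3 unfolding X_def by linarith
  show ?thesis
    unfolding Let_def rs_def[symmetric] rh dd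
    using R1 g2 g3' unfolding C_def D_def R_def X_def P_def by blast
qed


end
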